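(* Let $F:\mathbb{R}\to[0,1]$ be a distribution function with Lebesgue–Stieltjes measure $\mu_F$, let $0<\lambda\le1$ and $\alpha\in(0,1)$, and put $\xi=F^{\wedge}(\alpha)$, $\eta=F^{\vee}(\alpha)$. Then $A^{+}_{\lambda,\alpha}=\{x\in\mathbb{R}:x>\xi,\ F_\lambda(x)\le\alpha\}$ is a Borel set and $\mu_F(A^{+}_{\lambda,\alpha})=0$. In particular, if $\xi<\eta$, then $\mu_F(\{x\in\mathbb{R}:F(x)=\alpha\})=\Delta F(\xi)=\alpha-F(\xi-)$.
   Context: A distribution function is a non-decreasing, right-continuous $F:\mathbb{R}\to[0,1]$ with limits $0$ at $-\infty$ and $1$ at $+\infty$. $\mu_F$ is the unique Borel measure on $\mathbb{R}$ with $\mu_F((x,y])=F(y)-F(x)$. $F(x-)=\lim_{z\uparrow x}F(z)$, $\Delta F(x)=F(x)-F(x-)$, $F_\lambda(x)=F(x-)+\lambda\Delta F(x)$. $F^{\wedge}(\alpha)=\inf\{x:F(x)\ge\alpha\}$, $F^{\vee}(\alpha)=\inf\{x:F(x)>\alpha\}$. *)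

theory Defs
  imports "HOL-Analysis.Analysis"
begin

definition distribution_function :: "(real \<Rightarrow> real) \<Rightarrow> bool" where
  "distribution_function F \<longleftrightarrow>
     mono F \<and> (\<forall>x. 0 \<le> F x \<and> F x \<le> 1) \<and>
     (\<forall>x. continuous (at_right x) F) \<and>
     (F \<longlongrightarrow> 0) at_bot \<and> (F \<longlongrightarrow> 1) at_top"

definition left_lim :: "(real \<Rightarrow> real) \<Rightarrow> real \<Rightarrow> real" where
  "left_lim F x = Lim (at_left x) F"

definition jump :: "(real \<Rightarrow> real) \<Rightarrow> real \<Rightarrow> real" where
  "jump F x = F x - left_lim F x"

definition F_lam :: "(real \<Rightarrow> real) \<Rightarrow> real \<Rightarrow> real \<Rightarrow> real" where
  "F_lam F l x = left_lim F x + l * jump F x"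

definition lower_quantile :: "(real \<Rightarrow> real) \<Rightarrow> real \<Rightarrow> real" where
  "lower_quantile F \<alpha> = Inf {x. F x \<ge> \<alpha>}"

definition upper_quantile :: "(real \<Rightarrow> real) \<Rightarrow> real \<Rightarrow> real" where
  "upper_quantile F \<alpha> = Inf {x. F x > \<alpha>}"

end

theory Submission
  imports Defs "HOL-Probability.Probability"
begin

theorem mainTheorem5:
  fixes F :: "real \<Rightarrow> real" and lam \<alpha> :: real
  assumes "distribution_function F"
    and "0 < lam" and "lam \<le> 1"
    and "0 < \<alpha>" and "\<alpha> < 1"
  defines "\<xi> \<equiv> lower_quantile F \<alpha>"
    and "\<eta> \<equiv> upper_quantile F \<alpha>"
  defines "A \<equiv> {x. x > \<xi> \<and> F_lam F lam x \<le> \<alpha>}"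
  shows "A \<in> sets borel \<and> emeasure (interval_measure F) A = 0
    \<and> (\<xi> < \<eta> \<longrightarrow>
         emeasure (interval_measure F) {x. F x = \<alpha>} = ennreal (jump F \<xi>)
       \<and> jump F \<xi> = \<alpha> - left_lim F \<xi>)"
proof -
  note df = assms(1)[unfolded distribution_function_def]
  have mono: "\<And>x y. x \<le> y \<Longrightarrow> F x \<le> F y" using df by (auto simp: mono_def)
  have rc: "\<And>a. continuous (at_right a) F" using df by auto
  have bot: "(F \<longlongrightarrow> 0) at_bot" and top: "(F \<longlongrightarrow> 1) at_top" using df by auto
  define M where "M = interval_measure F"
  have rd: "real_distribution M"
    unfolding M_def by (rule real_distribution_interval_measure[OF mono rc bot top])
  interpret R: real_distribution M by (rule rd)
  have sM[simp]: "sets M = sets borel" unfolding M_def by simp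
  have cdfM: "cdf M = F" unfolding M_def by (rule cdf_interval_measure[OF mono rc bot])
  have mIic: "measure M {..x} = F x" for x using cdfM by (simp add: cdf_def fun_eq_iff)
  have ll: "left_lim F x = measure M {..<x}" for x
  proof -
    have "(F \<longlongrightarrow> measure M {..<x}) (at_left x)" using R.cdf_at_left[of x] cdfM by simp
    then show ?thesis unfolding left_lim_def by (intro tendsto_Lim) auto
  qed
  have ll_ge: "F y \<le> left_lim F x" if "y < x" for x y
    unfolding ll mIic[symmetric] using that by (intro R.finite_measure_mono) auto
  have ll_le: "left_lim F x \<le> F x" for x
    unfolding ll mIic[symmetric] by (intro R.finite_measure_mono) auto
  define S where "S = {x. F x \<ge> \<alpha>}"
  obtain c where c: "\<And>x. x \<ge> c \<Longrightarrow> F x > \<alpha>"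
  proof -
    have "eventually (\<lambda>x. F x > \<alpha>) at_top" using top assms(5) by (rule order_tendstoD)
    then show ?thesis using that by (auto simp: eventually_at_top_linorder)
  qed
  obtain b where b: "\<And>x. x \<le> b \<Longrightarrow> F x < \<alpha>"
  proof -
    have "eventually (\<lambda>x. F x < \<alpha>) at_bot" using bot assms(4) by (rule order_tendstoD)
    then show ?thesis using that by (auto simp: eventually_at_bot_linorder)
  qed
  have "c \<in> S" using c[of c] by (simp add: S_def)
  then have Sne: "S \<noteq> {}" by blast
  have Sbdd: "bdd_below S"
  proof (rule bdd_belowI)
    fix x assume "x \<in> S" then show "b \<le> x" using b[of x] by (force simp: S_def)
  qed
  have xi: "\<xi> = Inf S" unfolding \<xi>_def lower_quantile_def S_def ..
  have below: "F x < \<alpha>" if "x < \<xi>" for x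
  proof (rule ccontr)
    assume "\<not> F x < \<alpha>"
    then have "x \<in> S" by (auto simp: S_def)
    then have "\<xi> \<le> x" unfolding xi using Sbdd by (rule cInf_lower)
    with that show False by simp
  qed
  have Fxi: "F \<xi> \<ge> \<alpha>"
  proof -
    have "(F \<longlongrightarrow> F \<xi>) (at_right \<xi>)" using rc[of \<xi>] by (simp add: continuous_within)
    moreover have "eventually (\<lambda>y. \<alpha> \<le> F y) (at_right \<xi>)"
    proof -
      have "\<alpha> \<le> F y" if yx: "y > \<xi>" for y
      proof -
        obtain z where "z \<in> S" "z < y" using yx Sne Sbdd unfolding xi by (meson cInf_less_iff)
        then show ?thesis using mono[of z y] by (auto simp: S_def)
      qed
      then show ?thesis unfolding eventually_at_filter by (intro always_eventually) auto
    qed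
    ultimately show ?thesis by (rule tendsto_lowerbound) auto
  qed
  have Achar: "A = {x. \<xi> < x \<and> F x = \<alpha>}"
  proof (intro set_eqI iffI)
    fix x assume "x \<in> A"
    then have x: "\<xi> < x" "left_lim F x + lam * (F x - left_lim F x) \<le> \<alpha>"
      by (auto simp: A_def F_lam_def jump_def)
    have L: "\<alpha> \<le> left_lim F x" using ll_ge[OF x(1)] Fxi by simp
    have J: "0 \<le> F x - left_lim F x" using ll_le[of x] by simp
    have "lam * (F x - left_lim F x) \<le> 0" using x L by simp
    then have "F x - left_lim F x \<le> 0" using assms(2)
      by (meson linorder_not_le mult_pos_pos)
    then show "x \<in> {x. \<xi> < x \<and> F x = \<alpha>}" using x L J
      by (smt (verit) mem_Collect_eq mult_nonneg_nonneg assms(2))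
  next
    fix x assume "x \<in> {x. \<xi> < x \<and> F x = \<alpha>}"
    then have x: "\<xi> < x" "F x = \<alpha>" by auto
    have L: "left_lim F x = \<alpha>" using ll_ge[OF x(1)] Fxi ll_le[of x] x by simp
    then show "x \<in> A" using x by (simp add: A_def F_lam_def jump_def)
  qed
  have Fmeas: "F \<in> borel_measurable borel"
    by (rule borel_measurable_mono) (simp add: df)
  have Aborel: "A \<in> sets borel" unfolding Achar using Fmeas by measurable
  have A0: "emeasure M A = 0"
  proof (cases "A = {}")
    case True then show ?thesis by simp
  next
    case False
    then obtain a where a: "a \<in> A" by auto
    then have Fxi_eq: "F \<xi> = \<alpha>" using Fxi mono[of \<xi> a] by (auto simp: Achar)
    have down: "y \<in> A" if "x \<in> A" "\<xi> < y" "y \<le> x" for x y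
      using that mono[of \<xi> y] mono[of y x] Fxi_eq by (auto simp: Achar)
    have Abdd: "bdd_above A"
    proof -
      have "x \<le> c" if "x \<in> A" for x using c[of x] that by (force simp: Achar)
      then show ?thesis unfolding bdd_above_def by blast
    qed
    define s where "s = Sup A"
    have xs: "x \<le> s" if "x \<in> A" for x unfolding s_def using that Abdd by (rule cSup_upper)
    have xis: "\<xi> < s" using xs[OF a] a by (auto simp: Achar)
    show ?thesis
    proof (cases "s \<in> A")
      case True
      have AI: "A = {\<xi><..s}"
      proof (intro set_eqI iffI)
        fix x assume x: "x \<in> A"
        then have "\<xi> < x" by (simp add: Achar)
        then show "x \<in> {\<xi><..s}" using xs[OF x] by simp
      next
        fix x assume "x \<in> {\<xi><..s}"
        then show "x \<in> A" using down[OF True] by simp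
      qed
      have Fs: "F s = \<alpha>" using True by (simp add: Achar)
      have "emeasure M {\<xi><..s} = ennreal (F s - F \<xi>)" unfolding M_def
        by (rule emeasure_interval_measure_Ioc[OF _ mono rc]) (use xis in simp)
      then show ?thesis using AI Fs Fxi_eq by simp
    next
      case sA: False
      have AI: "A = {\<xi><..<s}"
      proof (intro set_eqI iffI)
        fix x assume x: "x \<in> A"
        then have "x \<noteq> s" using sA by auto
        moreover have "\<xi> < x" using x by (simp add: Achar)
        ultimately show "x \<in> {\<xi><..<s}" using xs[OF x] by simp
      next
        fix x assume x: "x \<in> {\<xi><..<s}"
        then obtain z where "z \<in> A" "x < z" using False Abdd unfolding s_def
          by (auto simp: less_cSup_iff)
        then show "x \<in> A" using down x by auto
      qed
      have "(F \<longlongrightarrow> \<alpha>) (at_left s)"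
      proof (rule tendsto_eventually)
        show "eventually (\<lambda>x. F x = \<alpha>) (at_left s)"
          using eventually_at_left_real[OF xis] by eventually_elim (auto simp: AI[symmetric] Achar)
      qed
      moreover have "(F \<longlongrightarrow> measure M {..<s}) (at_left s)" using R.cdf_at_left[of s] cdfM by simp
      ultimately have ls: "measure M {..<s} = \<alpha>" using tendsto_unique by force
      have "measure M A = measure M ({..<s} - {..\<xi>})" unfolding AI by (intro arg_cong[where f="measure M"]) auto
      also have "\<dots> = measure M {..<s} - measure M {..\<xi>}"
        using xis by (intro R.finite_measure_Diff) auto
      also have "\<dots> = 0" using ls mIic Fxi_eq by simp
      finally show ?thesis by (simp add: R.emeasure_eq_measure)
    qed
  qed
  have part2: "emeasure M {x. F x = \<alpha>} = ennreal (jump F \<xi>) \<and> jump F \<xi> = \<alpha> - left_lim F \<xi>"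
    if "\<xi> < \<eta>"
  proof -
    have Fxi_eq: "F \<xi> = \<alpha>"
    proof (rule ccontr)
      assume "F \<xi> \<noteq> \<alpha>"
      then have "F \<xi> > \<alpha>" using Fxi by simp
      moreover have "bdd_below {x. F x > \<alpha>}"
      proof (rule bdd_belowI)
        fix x assume "x \<in> {x. F x > \<alpha>}" then show "b \<le> x" using b[of x] by force
      qed
      ultimately have "\<eta> \<le> \<xi>" unfolding \<eta>_def upper_quantile_def by (intro cInf_lower) auto
      with that show False by simp
    qed
    have J: "jump F \<xi> = \<alpha> - left_lim F \<xi>" by (simp add: jump_def Fxi_eq)
    have eq: "{x. F x = \<alpha>} = {\<xi>} \<union> A"
    proof (intro set_eqI iffI)
      fix x assume "x \<in> {x. F x = \<alpha>}"
      then have "F x = \<alpha>" by simp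
      then have "\<not> x < \<xi>" using below[of x] by force
      then show "x \<in> {\<xi>} \<union> A" using \<open>F x = \<alpha>\<close> by (auto simp: Achar)
    next
      fix x assume "x \<in> {\<xi>} \<union> A" then show "x \<in> {x. F x = \<alpha>}" using Fxi_eq by (auto simp: Achar)
    qed
    have "measure M {\<xi>} = measure M ({..\<xi>} - {..<\<xi>})" by (intro arg_cong[where f="measure M"]) auto
    also have "\<dots> = measure M {..\<xi>} - measure M {..<\<xi>}" by (intro R.finite_measure_Diff) auto
    also have "\<dots> = jump F \<xi>" by (simp add: mIic ll jump_def)
    finally have ms: "measure M {\<xi>} = jump F \<xi>" .
    have "emeasure M {x. F x = \<alpha>} = emeasure M {\<xi>} + emeasure M A"
      unfolding eq using Aborel by (intro plus_emeasure[symmetric]) (auto simp: Achar)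
    also have "\<dots> = ennreal (jump F \<xi>)" using A0 ms by (simp add: R.emeasure_eq_measure)
    finally show ?thesis using J by simp
  qed
  show ?thesis using Aborel A0 part2 unfolding M_def by auto
qed

end
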